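(* rATL is strictly more expressive than rCTL, in the following sense: (i) for every rCTL formula $\varphi$ there is an rATL formula $\varphi^\star$ such that $V(s,\varphi^\star)=V_{rCTL}(s,\varphi)$ for every Kripke structure $\mathcal{K}$ and every state $s$ of $\mathcal{K}$ (with $\varphi^\star$ evaluated in $\mathcal{S}_\mathcal{K}$); and (ii) there exists an rATL formula $\psi$ such that for no rCTL formula $\chi$ it holds that $V(s,\psi)=V_{rCTL}(s,\chi)$ for every concurrent game structure $\mathcal{S}$ and every state $s$ of $\mathcal{S}$, where $V_{rCTL}$ on a concurrent game structure is evaluated in its underlying Kripke structure.
   Context: Fix a finite set $\mathrm{AP}$ of atomic propositions. A concurrent game structure (CGS) is a tuple $\mathcal{S}=(St,Ag,Ac,\delta,\ell)$ where $St$ is a finite set of states, $Ag$ a finite set of agents, $Ac$ a finite set of actions, $\ell:St\to 2^{\mathrm{AP}}$ a labeling, and $\delta:St\times AV\to St$ a transition function, where $AV$ is the set of action vectors for $Ag$ (an action vector for $A\subseteq Ag$ is a map $A\to Ac$). A state $s'$ is a successor of $s$ if $s'=\delta(s,v)$ for some $v\in AV$. A path is an infinite sequence $\pi=s_0s_1s_2\cdots$ of states with $s_{n+1}$ a successor of $s_n$ for all $n$; write $\pi[n]=s_n$. A strategy for an agent is a function $f:St^+\to Ac$. For $A\subseteq Ag$ and a set $F_A=\{f_a\mid a\in A\}$ of strategies, one for each agent in $A$, $out(s,F_A)$ is the set of paths $s_0s_1\cdots$ with $s_0=s$ such that for every $n\ge 0$ there is $v\in AV$ with $v(a)=f_a(s_0\cdots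 s_n)$ for all $a\in A$ and $s_{n+1}=\delta(s_n,v)$. $\mathbb{B}_4=\{1111,0111,0011,0001,0000\}$ is totally ordered by $1111\succ0111\succ0011\succ0001\succ0000$; for $b=b_1b_2b_3b_4\in\mathbb{B}_4$ and $k\in\{1,2,3,4\}$, $b[k]=b_k$; max and min on $\mathbb{B}_4$ refer to this order, and on bits to $0<1$. rATL formulas: state formulas $\varphi ::= p \mid \neg\varphi\mid\varphi\vee\varphi\mid\varphi\wedge\varphi\mid\varphi\to\varphi\mid\langle\!\langle A\rangle\!\rangle\Phi\mid[\![A]\!]\Phi$ and path formulas $\Phi::=\dot{\bigcirc}\varphi\mid\dot\Diamond\varphi\mid\dot\Box\varphi$, with $p\in\mathrm{AP}$ and $A$ a set of agents; an rATL formula is a state formula. On a CGS the valuation $V$ maps (state, state formula) and (path, path formula) pairs to $\mathbb{B}_4$: $V(s,p)=1111$ if $p\in\ell(s)$ and $0000$ otherwise; $V(s,\varphi_1\vee\varphi_2)=\max(V(s,\varphi_1),V(s,\varphi_2))$; $V(s,\varphi_1\wedge\varphi_2)=\min(V(s,\varphi_1),V(s,\varphi_2))$; $V(s,\neg\varphi)=0000$ if $V(s,\varphi)=1111$ and $1111$ otherwise; $V(s,\varphi_1\to\varphi_2)=1111$ if $V(s,\varphi_1)\preceq V(s,\varphi_2)$ and $V(s,\varphi_2)$ otherwise; $V(s,\langle\!\langle A\rangle\!\rangle\Phi)$ is the maximal $b\in\mathbb{B}_4$ such that there is a set $F_A$ of strategies (one per agent in $A$) with $V(\pi,\Phi)\succeq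 b$ for all $\pi\in out(s,F_A)$; $V(s,[\![A]\!]\Phi)$ is the maximal $b\in\mathbb{B}_4$ such that for every such $F_A$ there is $\pi\in out(s,F_A)$ with $V(\pi,\Phi)\succeq b$. For paths: $V(\pi,\dot\bigcirc\varphi)[k]=V(\pi[1],\varphi)[k]$; $V(\pi,\dot\Diamond\varphi)[k]=\max_{i\ge0}V(\pi[i],\varphi)[k]$; $V(\pi,\dot\Box\varphi)=b_1b_2b_3b_4$ with $b_1=\min_{i\ge0}V(\pi[i],\varphi)[1]$, $b_2=\max_{i\ge0}\min_{j\ge i}V(\pi[j],\varphi)[2]$, $b_3=\min_{i\ge0}\max_{j\ge i}V(\pi[j],\varphi)[3]$, $b_4=\max_{i\ge0}V(\pi[i],\varphi)[4]$. A Kripke structure is $\mathcal{K}=(S,I,R,L)$ with finite state set $S$, initial states $I\subseteq S$, transition relation $R\subseteq S\times S$ such that every state has an $R$-successor, and labeling $L:S\to2^{\mathrm{AP}}$; a path is an infinite sequence $s_0s_1\cdots$ with $(s_i,s_{i+1})\in R$; $\mathit{paths}(s)$ is the set of paths starting in $s$. rCTL formulas: state formulas $\varphi::=p\mid\neg\varphi\mid\varphi\vee\varphi\mid\varphi\wedge\varphi\mid\varphi\to\varphi\mid\exists\Phi\mid\forall\Phi$, path formulas $\Phi::=\dot\bigcirc\varphi\mid\dot\Diamond\varphi\mid\dot\Box\varphi$. The valuation $V_{rCTL}$ is defined exactly as $V$ above for atomic propositions, Boolean connectives and $\dot\bigcirc,\dot\Diamond,\dot\Box$ (with $L$ in place of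 $\ell$), and $V_{rCTL}(s,\exists\Phi)=\max_{\pi\in\mathit{paths}(s)}V_{rCTL}(\pi,\Phi)$, $V_{rCTL}(s,\forall\Phi)=\min_{\pi\in\mathit{paths}(s)}V_{rCTL}(\pi,\Phi)$. The underlying Kripke structure of a CGS $\mathcal{S}$ has the same states and labeling, with $R=\{(s,s')\mid s'\text{ is a successor of }s\}$. The CGS associated with $\mathcal{K}$ is $\mathcal{S}_\mathcal{K}=(S,\{a\},S,\delta,L)$ with a single agent $a$, actions $S$, and $\delta(s,s')=s'$ if $(s,s')\in R$, and $\delta(s,s')=s''$ for some fixed $s''$ with $(s,s'')\in R$ otherwise (action vectors for $\{a\}$ are identified with actions). *)

theory Defs
  imports Main "HOL-Library.FuncSet"
begin

text \<open>An element of B4 is represented by its number of 1-bits: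
  0000 = 0, 0001 = 1, 0011 = 2, 0111 = 3, 1111 = 4.  The total order on B4
  is then the order on nat restricted to 0..4.\<close>

definition b4_top :: nat where "b4_top = 4"
definition b4_bot :: nat where "b4_bot = 0"

text \<open>b[k] for k in 1..4\<close>
definition b4_bit :: "nat \<Rightarrow> nat \<Rightarrow> bool" where
  "b4_bit b k \<longleftrightarrow> 5 \<le> k + b"

text \<open>the element b1 b2 b3 b4 (for bit strings that lie in B4)\<close>
definition b4_of_bits :: "bool \<Rightarrow> bool \<Rightarrow> bool \<Rightarrow> bool \<Rightarrow> nat" where
  "b4_of_bits b1 b2 b3 b4 = of_bool b1 + of_bool b2 + of_bool b3 + of_bool b4"

definition b4_neg :: "nat \<Rightarrow> nat" where
  "b4_neg b = (if b = b4_top then b4_bot else b4_top)"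

definition b4_imp :: "nat \<Rightarrow> nat \<Rightarrow> nat" where
  "b4_imp b1 b2 = (if b1 \<le> b2 then b4_top else b2)"

record 'ap cgs =
  St :: "nat set"
  Ag :: "nat set"
  Ac :: "nat set"
  delta :: "nat \<Rightarrow> (nat \<Rightarrow> nat) \<Rightarrow> nat"
  lab :: "nat \<Rightarrow> 'ap set"

definition AV :: "'ap cgs \<Rightarrow> (nat \<Rightarrow> nat) set" where
  "AV S = (Ag S \<rightarrow>\<^sub>E Ac S)"

definition cgs_wf :: "'ap cgs \<Rightarrow> bool" where
  "cgs_wf S \<longleftrightarrow> finite (St S) \<and> St S \<noteq> {} \<and> finite (Ag S) \<and> finite (Ac S) \<and> Ac S \<noteq> {}
     \<and> (\<forall>s\<in>St S. \<forall>v\<in>AV S. delta S s v \<in> St S)"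

definition successor :: "'ap cgs \<Rightarrow> nat \<Rightarrow> nat \<Rightarrow> bool" where
  "successor S s s' \<longleftrightarrow> (\<exists>v\<in>AV S. s' = delta S s v)"

definition hist :: "(nat \<Rightarrow> nat) \<Rightarrow> nat \<Rightarrow> nat list" where
  "hist \<pi> n = map \<pi> [0..<Suc n]"

text \<open>F a is the strategy of agent a (for the agents a of A); a strategy maps
  nonempty state sequences to actions\<close>
definition is_strats :: "'ap cgs \<Rightarrow> nat set \<Rightarrow> (nat \<Rightarrow> nat list \<Rightarrow> nat) \<Rightarrow> bool" where
  "is_strats S A F \<longleftrightarrow> (\<forall>a\<in>A \<inter> Ag S. \<forall>h. F a h \<in> Ac S)"

definition out :: "'ap cgs \<Rightarrow> nat \<Rightarrow> nat set \<Rightarrow> (nat \<Rightarrow> nat list \<Rightarrow> nat) \<Rightarrow> (nat \<Rightarrow> nat) set" where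
  "out S s A F = {\<pi>. \<pi> 0 = s \<and> (\<forall>n. \<exists>v\<in>AV S. (\<forall>a\<in>A \<inter> Ag S. v a = F a (hist \<pi> n))
                                          \<and> \<pi> (Suc n) = delta S (\<pi> n) v)}"

datatype 'ap ratl =
    Prop 'ap
  | Neg "'ap ratl"
  | Or "'ap ratl" "'ap ratl"
  | And "'ap ratl" "'ap ratl"
  | Imp "'ap ratl" "'ap ratl"
  | Diam "nat set" "'ap ratl_path"
  | Box "nat set" "'ap ratl_path"
and 'ap ratl_path =
    Next "'ap ratl"
  | Ev "'ap ratl"
  | Alw "'ap ratl"

primrec Vs :: "'ap ratl \<Rightarrow> 'ap cgs \<Rightarrow> nat \<Rightarrow> nat"
  and Vp :: "'ap ratl_path \<Rightarrow> 'ap cgs \<Rightarrow> (nat \<Rightarrow> nat) \<Rightarrow> nat" where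
  "Vs (Prop p) S s = (if p \<in> lab S s then b4_top else b4_bot)"
| "Vs (Neg \<phi>) S s = b4_neg (Vs \<phi> S s)"
| "Vs (Or \<phi> \<psi>) S s = max (Vs \<phi> S s) (Vs \<psi> S s)"
| "Vs (And \<phi> \<psi>) S s = min (Vs \<phi> S s) (Vs \<psi> S s)"
| "Vs (Imp \<phi> \<psi>) S s = b4_imp (Vs \<phi> S s) (Vs \<psi> S s)"
| "Vs (Diam A \<Phi>) S s = Max {b. b \<le> b4_top \<and>
      (\<exists>F. is_strats S A F \<and> (\<forall>\<pi>\<in>out S s A F. b \<le> Vp \<Phi> S \<pi>))}"
| "Vs (Box A \<Phi>) S s = Max {b. b \<le> b4_top \<and>
      (\<forall>F. is_strats S A F \<longrightarrow> (\<exists>\<pi>\<in>out S s A F. b \<le> Vp \<Phi> S \<pi>))}"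
| "Vp (Next \<phi>) S \<pi> = Vs \<phi> S (\<pi> 1)"
| "Vp (Ev \<phi>) S \<pi> = b4_of_bits
      (\<exists>i. b4_bit (Vs \<phi> S (\<pi> i)) 1) (\<exists>i. b4_bit (Vs \<phi> S (\<pi> i)) 2)
      (\<exists>i. b4_bit (Vs \<phi> S (\<pi> i)) 3) (\<exists>i. b4_bit (Vs \<phi> S (\<pi> i)) 4)"
| "Vp (Alw \<phi>) S \<pi> = b4_of_bits
      (\<forall>i. b4_bit (Vs \<phi> S (\<pi> i)) 1)
      (\<exists>i. \<forall>j\<ge>i. b4_bit (Vs \<phi> S (\<pi> j)) 2)
      (\<forall>i. \<exists>j\<ge>i. b4_bit (Vs \<phi> S (\<pi> j)) 3)
      (\<exists>i. b4_bit (Vs \<phi> S (\<pi> i)) 4)"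

record 'ap kripke =
  KS :: "nat set"
  KI :: "nat set"
  KR :: "(nat \<times> nat) set"
  KL :: "nat \<Rightarrow> 'ap set"

definition kripke_wf :: "'ap kripke \<Rightarrow> bool" where
  "kripke_wf K \<longleftrightarrow> finite (KS K) \<and> KI K \<subseteq> KS K \<and> KR K \<subseteq> KS K \<times> KS K
     \<and> (\<forall>s\<in>KS K. \<exists>s'. (s, s') \<in> KR K)"

definition kpaths :: "'ap kripke \<Rightarrow> nat \<Rightarrow> (nat \<Rightarrow> nat) set" where
  "kpaths K s = {\<pi>. \<pi> 0 = s \<and> (\<forall>n. (\<pi> n, \<pi> (Suc n)) \<in> KR K)}"

datatype 'ap rctl =
    CProp 'ap
  | CNeg "'ap rctl"
  | COr "'ap rctl" "'ap rctl"
  | CAnd "'ap rctl" "'ap rctl"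
  | CImp "'ap rctl" "'ap rctl"
  | CEx "'ap rctl_path"
  | CAll "'ap rctl_path"
and 'ap rctl_path =
    CNext "'ap rctl"
  | CEv "'ap rctl"
  | CAlw "'ap rctl"

primrec Vcs :: "'ap rctl \<Rightarrow> 'ap kripke \<Rightarrow> nat \<Rightarrow> nat"
  and Vcp :: "'ap rctl_path \<Rightarrow> 'ap kripke \<Rightarrow> (nat \<Rightarrow> nat) \<Rightarrow> nat" where
  "Vcs (CProp p) K s = (if p \<in> KL K s then b4_top else b4_bot)"
| "Vcs (CNeg \<phi>) K s = b4_neg (Vcs \<phi> K s)"
| "Vcs (COr \<phi> \<psi>) K s = max (Vcs \<phi> K s) (Vcs \<psi> K s)"
| "Vcs (CAnd \<phi> \<psi>) K s = min (Vcs \<phi> K s) (Vcs \<psi> K s)"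
| "Vcs (CImp \<phi> \<psi>) K s = b4_imp (Vcs \<phi> K s) (Vcs \<psi> K s)"
| "Vcs (CEx \<Phi>) K s = Max ((\<lambda>\<pi>. Vcp \<Phi> K \<pi>) ` kpaths K s)"
| "Vcs (CAll \<Phi>) K s = Min ((\<lambda>\<pi>. Vcp \<Phi> K \<pi>) ` kpaths K s)"
| "Vcp (CNext \<phi>) K \<pi> = Vcs \<phi> K (\<pi> 1)"
| "Vcp (CEv \<phi>) K \<pi> = b4_of_bits
      (\<exists>i. b4_bit (Vcs \<phi> K (\<pi> i)) 1) (\<exists>i. b4_bit (Vcs \<phi> K (\<pi> i)) 2)
      (\<exists>i. b4_bit (Vcs \<phi> K (\<pi> i)) 3) (\<exists>i. b4_bit (Vcs \<phi> K (\<pi> i)) 4)"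
| "Vcp (CAlw \<phi>) K \<pi> = b4_of_bits
      (\<forall>i. b4_bit (Vcs \<phi> K (\<pi> i)) 1)
      (\<exists>i. \<forall>j\<ge>i. b4_bit (Vcs \<phi> K (\<pi> j)) 2)
      (\<forall>i. \<exists>j\<ge>i. b4_bit (Vcs \<phi> K (\<pi> j)) 3)
      (\<exists>i. b4_bit (Vcs \<phi> K (\<pi> i)) 4)"

definition cgs_of_kripke :: "'ap kripke \<Rightarrow> 'ap cgs" where
  "cgs_of_kripke K = \<lparr> St = KS K, Ag = {0}, Ac = KS K,
     delta = (\<lambda>s v. if (s, v 0) \<in> KR K then v 0 else (SOME s''. (s, s'') \<in> KR K)),
     lab = KL K \<rparr>"

definition kripke_of_cgs :: "'ap cgs \<Rightarrow> 'ap kripke" where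
  "kripke_of_cgs S = \<lparr> KS = St S, KI = St S,
     KR = {(s, s'). s \<in> St S \<and> successor S s s'}, KL = lab S \<rparr>"

end

theory Submission
  imports Defs
begin

primrec tr :: "'ap rctl \<Rightarrow> 'ap ratl" and trp :: "'ap rctl_path \<Rightarrow> 'ap ratl_path" where
  "tr (CProp p) = Prop p"
| "tr (CNeg \<phi>) = Neg (tr \<phi>)"
| "tr (COr \<phi> \<psi>) = Or (tr \<phi>) (tr \<psi>)"
| "tr (CAnd \<phi> \<psi>) = And (tr \<phi>) (tr \<psi>)"
| "tr (CImp \<phi> \<psi>) = Imp (tr \<phi>) (tr \<psi>)"
| "tr (CEx \<Phi>) = Box {} (trp \<Phi>)"
| "tr (CAll \<Phi>) = Diam {} (trp \<Phi>)"
| "trp (CNext \<phi>) = Next (tr \<phi>)"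
| "trp (CEv \<phi>) = Ev (tr \<phi>)"
| "trp (CAlw \<phi>) = Alw (tr \<phi>)"

lemma succ_cgs:
  assumes wf: "kripke_wf K" and s: "s \<in> KS K"
  shows "successor (cgs_of_kripke K) s s' \<longleftrightarrow> (s, s') \<in> KR K"
proof
  assume "successor (cgs_of_kripke K) s s'"
  then obtain v where "s' = (if (s, v 0) \<in> KR K then v 0 else (SOME s''. (s, s'') \<in> KR K))"
    unfolding successor_def AV_def cgs_of_kripke_def by auto
  moreover have "\<exists>s''. (s, s'') \<in> KR K" using wf s unfolding kripke_wf_def by auto
  ultimately show "(s, s') \<in> KR K" by (auto intro: someI_ex)
next
  assume r: "(s, s') \<in> KR K"
  then have "s' \<in> KS K" using wf unfolding kripke_wf_def by auto
  then have "(\<lambda>x\<in>{0::nat}. s') \<in> AV (cgs_of_kripke K)"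
    unfolding AV_def cgs_of_kripke_def by auto
  then show "successor (cgs_of_kripke K) s s'"
    unfolding successor_def using r
    by (auto simp: cgs_of_kripke_def intro!: bexI[of _ "(\<lambda>x\<in>{0::nat}. s')"])
qed

lemma kpath_in:
  assumes wf: "kripke_wf K" and p: "\<pi> \<in> kpaths K s"
  shows "\<pi> n \<in> KS K"
proof -
  have "(\<pi> n, \<pi> (Suc n)) \<in> KR K" using p unfolding kpaths_def by auto
  then show ?thesis using wf unfolding kripke_wf_def by auto
qed

lemma out_cgs:
  assumes wf: "kripke_wf K" and s: "s \<in> KS K"
  shows "out (cgs_of_kripke K) s {} F = kpaths K s"
proof
  show "out (cgs_of_kripke K) s {} F \<subseteq> kpaths K s"
  proof
    fix \<pi> assume p: "\<pi> \<in> out (cgs_of_kripke K) s {} F"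
    then have st: "\<And>n. successor (cgs_of_kripke K) (\<pi> n) (\<pi> (Suc n))" and z: "\<pi> 0 = s"
      unfolding out_def successor_def by auto
    have ks: "\<pi> n \<in> KS K" for n
    proof (induction n)
      case 0 then show ?case using z s by simp
    next
      case (Suc n)
      then have "(\<pi> n, \<pi> (Suc n)) \<in> KR K" using succ_cgs[OF wf Suc] st by blast
      then show ?case using wf unfolding kripke_wf_def by auto
    qed
    show "\<pi> \<in> kpaths K s" unfolding kpaths_def using z succ_cgs[OF wf ks] st by auto
  qed
next
  show "kpaths K s \<subseteq> out (cgs_of_kripke K) s {} F"
  proof
    fix \<pi> assume p: "\<pi> \<in> kpaths K s"
    have "successor (cgs_of_kripke K) (\<pi> n) (\<pi> (Suc n))" for n
      using succ_cgs[OF wf kpath_in[OF wf p]] p unfolding kpaths_def by auto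
    then show "\<pi> \<in> out (cgs_of_kripke K) s {} F"
      using p unfolding out_def successor_def kpaths_def by auto
  qed
qed

lemma kpaths_ne:
  assumes wf: "kripke_wf K" and s: "s \<in> KS K"
  shows "kpaths K s \<noteq> {}"
proof -
  define \<pi> where "\<pi> = rec_nat s (\<lambda>_ x. SOME y. (x, y) \<in> KR K)"
  have "\<pi> n \<in> KS K \<and> (\<pi> n, \<pi> (Suc n)) \<in> KR K" for n
  proof (induction n)
    case 0
    have "\<exists>y. (s, y) \<in> KR K" using wf s unfolding kripke_wf_def by auto
    then show ?case using s unfolding \<pi>_def by (auto intro: someI_ex)
  next
    case (Suc n)
    then have k: "\<pi> (Suc n) \<in> KS K" using wf unfolding kripke_wf_def by auto
    then have "\<exists>y. (\<pi> (Suc n), y) \<in> KR K" using wf unfolding kripke_wf_def by auto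
    then have "(\<pi> (Suc n), \<pi> (Suc (Suc n))) \<in> KR K" unfolding \<pi>_def by (auto intro: someI_ex)
    then show ?case using k by simp
  qed
  then have "\<pi> \<in> kpaths K s" unfolding kpaths_def \<pi>_def by auto
  then show ?thesis by auto
qed

lemma b4_of_bits_le: "b4_of_bits a b c d \<le> 4"
  unfolding b4_of_bits_def by simp

lemma Max_atMost_nat: "Max {..(n::nat)} = n" by (rule Max_eqI) auto

lemma max_lemma:
  fixes f :: "(nat \<Rightarrow> nat) \<Rightarrow> nat"
  assumes ne: "P \<noteq> {}" and le: "\<forall>\<pi>\<in>P. f \<pi> \<le> 4"
  shows "Max {b. b \<le> b4_top \<and> (\<exists>\<pi>\<in>P. b \<le> f \<pi>)} = Max (f ` P) \<and> Max (f ` P) \<le> 4"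
proof -
  have fin: "finite (f ` P)" by (rule finite_subset[of _ "{..4}"]) (use le in auto)
  have ne': "f ` P \<noteq> {}" using ne by simp
  have M: "Max (f ` P) \<le> 4" using fin ne' le by simp
  have "{b. b \<le> b4_top \<and> (\<exists>\<pi>\<in>P. b \<le> f \<pi>)} = {..Max (f ` P)}"
  proof (intro set_eqI iffI)
    fix b assume "b \<in> {b. b \<le> b4_top \<and> (\<exists>\<pi>\<in>P. b \<le> f \<pi>)}"
    then show "b \<in> {..Max (f ` P)}" using Max_ge_iff[OF fin ne'] by auto
  next
    fix b assume "b \<in> {..Max (f ` P)}"
    then show "b \<in> {b. b \<le> b4_top \<and> (\<exists>\<pi>\<in>P. b \<le> f \<pi>)}" using M Max_ge_iff[OF fin ne', of b]
      unfolding b4_top_def by auto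
  qed
  then show ?thesis using M by (simp add: Max_atMost_nat)
qed

lemma min_lemma:
  fixes f :: "(nat \<Rightarrow> nat) \<Rightarrow> nat"
  assumes ne: "P \<noteq> {}" and le: "\<forall>\<pi>\<in>P. f \<pi> \<le> 4"
  shows "Max {b. b \<le> b4_top \<and> (\<forall>\<pi>\<in>P. b \<le> f \<pi>)} = Min (f ` P) \<and> Min (f ` P) \<le> 4"
proof -
  have fin: "finite (f ` P)" by (rule finite_subset[of _ "{..4}"]) (use le in auto)
  have ne': "f ` P \<noteq> {}" using ne by simp
  have M: "Min (f ` P) \<le> 4" using fin ne' le Min_le_iff by blast
  have "{b. b \<le> b4_top \<and> (\<forall>\<pi>\<in>P. b \<le> f \<pi>)} = {..Min (f ` P)}"
  proof (intro set_eqI iffI)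
    fix b assume "b \<in> {b. b \<le> b4_top \<and> (\<forall>\<pi>\<in>P. b \<le> f \<pi>)}"
    then show "b \<in> {..Min (f ` P)}" using Min_ge_iff[OF fin ne'] by auto
  next
    fix b assume "b \<in> {..Min (f ` P)}"
    then show "b \<in> {b. b \<le> b4_top \<and> (\<forall>\<pi>\<in>P. b \<le> f \<pi>)}" using M Min_ge_iff[OF fin ne', of b]
      unfolding b4_top_def by auto
  qed
  then show ?thesis using M by (simp add: Max_atMost_nat)
qed

lemma tr_correct:
  assumes wf: "kripke_wf K"
  shows "(\<forall>s\<in>KS K. Vs (tr \<phi>) (cgs_of_kripke K) s = Vcs \<phi> K s \<and> Vcs \<phi> K s \<le> 4)"
   and "(\<forall>\<pi>. (\<forall>n. \<pi> n \<in> KS K) \<longrightarrow> Vp (trp \<Phi>) (cgs_of_kripke K) \<pi> = Vcp \<Phi> K \<pi> \<and> Vcp \<Phi> K \<pi> \<le> 4)"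
proof (induction \<phi> and \<Phi>)
  case (CProp p)
  then show ?case by (simp add: cgs_of_kripke_def b4_top_def b4_bot_def)
next
  case (CNeg \<phi>)
  then show ?case by (simp add: b4_neg_def b4_top_def b4_bot_def)
next
  case (COr \<phi> \<psi>)
  then show ?case by simp
next
  case (CAnd \<phi> \<psi>)
  then show ?case by (simp add: min.coboundedI1)
next
  case (CImp \<phi> \<psi>)
  then show ?case by (simp add: b4_imp_def b4_top_def)
next
  case (CEx \<Phi>)
  show ?case
  proof
    fix s assume s: "s \<in> KS K"
    have eq: "\<forall>\<pi>\<in>kpaths K s. Vp (trp \<Phi>) (cgs_of_kripke K) \<pi> = Vcp \<Phi> K \<pi> \<and> Vcp \<Phi> K \<pi> \<le> 4"
      using CEx kpath_in[OF wf] by blast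
    have "Vs (tr (CEx \<Phi>)) (cgs_of_kripke K) s
        = Max {b. b \<le> b4_top \<and> (\<exists>\<pi>\<in>kpaths K s. b \<le> Vcp \<Phi> K \<pi>)}"
      using eq by (simp add: out_cgs[OF wf s] is_strats_def)
    then show "Vs (tr (CEx \<Phi>)) (cgs_of_kripke K) s = Vcs (CEx \<Phi>) K s \<and> Vcs (CEx \<Phi>) K s \<le> 4"
      using max_lemma[OF kpaths_ne[OF wf s], of "Vcp \<Phi> K"] eq by simp
  qed
next
  case (CAll \<Phi>)
  show ?case
  proof
    fix s assume s: "s \<in> KS K"
    have eq: "\<forall>\<pi>\<in>kpaths K s. Vp (trp \<Phi>) (cgs_of_kripke K) \<pi> = Vcp \<Phi> K \<pi> \<and> Vcp \<Phi> K \<pi> \<le> 4"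
      using CAll kpath_in[OF wf] by blast
    have "Vs (tr (CAll \<Phi>)) (cgs_of_kripke K) s
        = Max {b. b \<le> b4_top \<and> (\<forall>\<pi>\<in>kpaths K s. b \<le> Vcp \<Phi> K \<pi>)}"
      using eq by (simp add: out_cgs[OF wf s] is_strats_def)
    then show "Vs (tr (CAll \<Phi>)) (cgs_of_kripke K) s = Vcs (CAll \<Phi>) K s \<and> Vcs (CAll \<Phi>) K s \<le> 4"
      using min_lemma[OF kpaths_ne[OF wf s], of "Vcp \<Phi> K"] eq by simp
  qed
next
  case (CNext \<phi>)
  then show ?case by simp
next
  case (CEv \<phi>)
  show ?case
  proof (intro allI impI)
    fix \<pi> :: "nat \<Rightarrow> nat" assume "\<forall>n. \<pi> n \<in> KS K"
    then have "\<And>i. Vs (tr \<phi>) (cgs_of_kripke K) (\<pi> i) = Vcs \<phi> K (\<pi> i)" using CEv by blast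
    then show "Vp (trp (CEv \<phi>)) (cgs_of_kripke K) \<pi> = Vcp (CEv \<phi>) K \<pi> \<and> Vcp (CEv \<phi>) K \<pi> \<le> 4"
      by (simp add: b4_of_bits_le)
  qed
next
  case (CAlw \<phi>)
  show ?case
  proof (intro allI impI)
    fix \<pi> :: "nat \<Rightarrow> nat" assume "\<forall>n. \<pi> n \<in> KS K"
    then have "\<And>i. Vs (tr \<phi>) (cgs_of_kripke K) (\<pi> i) = Vcs \<phi> K (\<pi> i)" using CAlw by blast
    then show "Vp (trp (CAlw \<phi>)) (cgs_of_kripke K) \<pi> = Vcp (CAlw \<phi>) K \<pi> \<and> Vcp (CAlw \<phi>) K \<pi> \<le> 4"
      by (simp add: b4_of_bits_le)
  qed
qed


definition S1 :: "'ap cgs" where "S1 = \<lparr>St = {0,1,2}, Ag = {0}, Ac = {0,1},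
  delta = (\<lambda>s v. if s = 0 then (if v 0 = 0 then 1 else 2) else s),
  lab = (\<lambda>s. if s = 1 then UNIV else {})\<rparr>"

definition S2 :: "'ap cgs" where "S2 = \<lparr>St = {0,1,2}, Ag = {0,1}, Ac = {0,1},
  delta = (\<lambda>s v. if s = 0 then (if v 0 = v 1 then 1 else 2) else s),
  lab = (\<lambda>s. if s = 1 then UNIV else {})\<rparr>"

lemma succ1: "successor (S1 :: 'ap cgs) s s' \<longleftrightarrow> (s = 0 \<and> s' \<in> {1,2}) \<or> (s \<noteq> 0 \<and> s' = s)"
proof
  assume "successor (S1 :: 'ap cgs) s s'"
  then obtain v where "s' = delta (S1 :: 'ap cgs) s v" unfolding successor_def by blast
  then have "s' = (if s = 0 then (if v 0 = 0 then 1 else 2) else s)" by (simp add: S1_def)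
  then show "(s = 0 \<and> s' \<in> {1,2}) \<or> (s \<noteq> 0 \<and> s' = s)" by (simp split: if_splits)
next
  define v0 where "v0 = (\<lambda>x\<in>{0::nat}. 0::nat)"
  define v1 where "v1 = (\<lambda>x\<in>{0::nat}. 1::nat)"
  have a: "v0 \<in> AV (S1 :: 'ap cgs)" "v1 \<in> AV (S1 :: 'ap cgs)"
    unfolding AV_def S1_def v0_def v1_def by simp_all
  have d: "delta (S1 :: 'ap cgs) 0 v0 = 1" "delta (S1 :: 'ap cgs) 0 v1 = 2"
     "s \<noteq> 0 \<Longrightarrow> delta (S1 :: 'ap cgs) s v0 = s"
    by (simp_all add: S1_def v0_def v1_def)
  assume "(s = 0 \<and> s' \<in> {1,2}) \<or> (s \<noteq> 0 \<and> s' = s)"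
  then show "successor (S1 :: 'ap cgs) s s'"
    unfolding successor_def
  proof (elim disjE conjE)
    assume s0: "s = 0" and "s' \<in> {1,2}"
    then consider "s' = 1" | "s' = 2" by auto
    then show "\<exists>v\<in>AV (S1 :: 'ap cgs). s' = delta (S1 :: 'ap cgs) s v"
    proof cases
      case 1 show ?thesis by (rule bexI[OF _ a(1)]) (use d(1) s0 1 in simp)
    next
      case 2 show ?thesis by (rule bexI[OF _ a(2)]) (use d(2) s0 2 in simp)
    qed
  next
    assume "s \<noteq> 0" "s' = s"
    then show "\<exists>v\<in>AV (S1 :: 'ap cgs). s' = delta (S1 :: 'ap cgs) s v"
      by (intro bexI[OF _ a(1)]) (simp add: d)
  qed
qed

lemma succ2: "successor (S2 :: 'ap cgs) s s' \<longleftrightarrow> (s = 0 \<and> s' \<in> {1,2}) \<or> (s \<noteq> 0 \<and> s' = s)"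
proof
  assume "successor (S2 :: 'ap cgs) s s'"
  then obtain v where "s' = delta (S2 :: 'ap cgs) s v" unfolding successor_def by blast
  then have "s' = (if s = 0 then (if v 0 = v 1 then 1 else 2) else s)" by (simp add: S2_def)
  then show "(s = 0 \<and> s' \<in> {1,2}) \<or> (s \<noteq> 0 \<and> s' = s)" by (simp split: if_splits)
next
  define v0 where "v0 = (\<lambda>x\<in>{0::nat,1}. 0::nat)"
  define v1 where "v1 = (\<lambda>x\<in>{0::nat,1}. if x = 0 then 0 else 1::nat)"
  have a: "v0 \<in> AV (S2 :: 'ap cgs)" "v1 \<in> AV (S2 :: 'ap cgs)"
    unfolding AV_def S2_def v0_def v1_def by auto
  have d: "delta (S2 :: 'ap cgs) 0 v0 = 1" "delta (S2 :: 'ap cgs) 0 v1 = 2"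
     "s \<noteq> 0 \<Longrightarrow> delta (S2 :: 'ap cgs) s v0 = s"
    by (simp_all add: S2_def v0_def v1_def)
  assume "(s = 0 \<and> s' \<in> {1,2}) \<or> (s \<noteq> 0 \<and> s' = s)"
  then show "successor (S2 :: 'ap cgs) s s'"
    unfolding successor_def
  proof (elim disjE conjE)
    assume s0: "s = 0" and "s' \<in> {1,2}"
    then consider "s' = 1" | "s' = 2" by auto
    then show "\<exists>v\<in>AV (S2 :: 'ap cgs). s' = delta (S2 :: 'ap cgs) s v"
    proof cases
      case 1 show ?thesis by (rule bexI[OF _ a(1)]) (use d(1) s0 1 in simp)
    next
      case 2 show ?thesis by (rule bexI[OF _ a(2)]) (use d(2) s0 2 in simp)
    qed
  next
    assume "s \<noteq> 0" "s' = s"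
    then show "\<exists>v\<in>AV (S2 :: 'ap cgs). s' = delta (S2 :: 'ap cgs) s v"
      by (intro bexI[OF _ a(1)]) (simp add: d)
  qed
qed
lemma wf1: "cgs_wf (S1 :: 'ap cgs)"
  unfolding cgs_wf_def S1_def AV_def by auto

lemma wf2: "cgs_wf (S2 :: 'ap cgs)"
  unfolding cgs_wf_def S2_def AV_def by auto

lemma same_kripke: "kripke_of_cgs (S1 :: 'ap cgs) = kripke_of_cgs (S2 :: 'ap cgs)"
proof -
  have "St (S1 :: 'ap cgs) = St (S2 :: 'ap cgs)" "lab (S1 :: 'ap cgs) = lab (S2 :: 'ap cgs)"
    by (simp_all add: S1_def S2_def)
  moreover have "successor (S1 :: 'ap cgs) = successor (S2 :: 'ap cgs)"
    by (intro ext) (simp only: succ1 succ2)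
  ultimately show ?thesis unfolding kripke_of_cgs_def by simp
qed

abbreviation psi :: "'ap ratl" where "psi \<equiv> Diam {0} (Next (Prop undefined))"

lemma val1: "Vs psi (S1 :: 'ap cgs) 0 = 4"
proof -
  have "{b. b \<le> b4_top \<and> (\<exists>F. is_strats (S1 :: 'ap cgs) {0} F \<and>
      (\<forall>\<pi>\<in>out (S1 :: 'ap cgs) 0 {0} F. b \<le> Vp (Next (Prop undefined)) (S1 :: 'ap cgs) \<pi>))} = {..4}"
  proof (intro set_eqI iffI)
    fix b assume b: "b \<in> {..4::nat}"
    have st: "is_strats (S1 :: 'ap cgs) {0} (\<lambda>_ _. 0)" unfolding is_strats_def S1_def by simp
    have "\<forall>\<pi>\<in>out (S1 :: 'ap cgs) 0 {0} (\<lambda>_ _. 0). b \<le> Vp (Next (Prop undefined)) (S1 :: 'ap cgs) \<pi>"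
    proof
      fix \<pi> assume "\<pi> \<in> out (S1 :: 'ap cgs) 0 {0} (\<lambda>_ _. 0)"
      then have p0: "\<pi> 0 = 0" and "\<exists>v\<in>AV (S1 :: 'ap cgs). (\<forall>a\<in>{0} \<inter> Ag (S1 :: 'ap cgs). v a = 0)
           \<and> \<pi> (Suc 0) = delta (S1 :: 'ap cgs) (\<pi> 0) v"
        unfolding out_def by blast+
      then obtain v where "\<forall>a\<in>{0} \<inter> Ag (S1 :: 'ap cgs). v a = 0"
           and pv: "\<pi> (Suc 0) = delta (S1 :: 'ap cgs) (\<pi> 0) v" by blast
      then have "v 0 = 0" by (simp add: S1_def)
      then have "\<pi> 1 = 1" using pv p0 by (simp add: S1_def)
      then show "b \<le> Vp (Next (Prop undefined)) (S1 :: 'ap cgs) \<pi>" using b by (simp add: S1_def b4_top_def)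
    qed
    then show "b \<in> {b. b \<le> b4_top \<and> (\<exists>F. is_strats (S1 :: 'ap cgs) {0} F \<and>
      (\<forall>\<pi>\<in>out (S1 :: 'ap cgs) 0 {0} F. b \<le> Vp (Next (Prop undefined)) (S1 :: 'ap cgs) \<pi>))}"
    proof -
      have "b \<le> b4_top" using b by (simp add: b4_top_def)
      then show ?thesis unfolding mem_Collect_eq using st \<open>\<forall>\<pi>\<in>out (S1 :: 'ap cgs) 0 {0} (\<lambda>_ _. 0). _\<close> by blast
    qed
  qed (simp add: b4_top_def)
  moreover have "Max {..4::nat} = 4" by (rule Max_eqI) auto
  ultimately show ?thesis by simp
qed

lemma val2: "Vs psi (S2 :: 'ap cgs) 0 = 0"
proof -
  have "{b. b \<le> b4_top \<and> (\<exists>F. is_strats (S2 :: 'ap cgs) {0} F \<and>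
      (\<forall>\<pi>\<in>out (S2 :: 'ap cgs) 0 {0} F. b \<le> Vp (Next (Prop undefined)) (S2 :: 'ap cgs) \<pi>))} = {0}"
  proof (intro set_eqI iffI)
    fix b assume "b \<in> {b. b \<le> b4_top \<and> (\<exists>F. is_strats (S2 :: 'ap cgs) {0} F \<and>
      (\<forall>\<pi>\<in>out (S2 :: 'ap cgs) 0 {0} F. b \<le> Vp (Next (Prop undefined)) (S2 :: 'ap cgs) \<pi>))}"
    then obtain F where F: "is_strats (S2 :: 'ap cgs) {0} F"
      and all: "\<forall>\<pi>\<in>out (S2 :: 'ap cgs) 0 {0} F. b \<le> Vp (Next (Prop undefined)) (S2 :: 'ap cgs) \<pi>" unfolding mem_Collect_eq by blast
    define \<pi> :: "nat \<Rightarrow> nat" where "\<pi> = (\<lambda>n. if n = 0 then 0 else 2)"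
    have Fin: "F 0 h \<in> {0,1}" for h using F unfolding is_strats_def S2_def by auto
    have "\<pi> \<in> out (S2 :: 'ap cgs) 0 {0} F"
      unfolding out_def
    proof (intro CollectI conjI allI)
      show "\<pi> 0 = 0" by (simp add: \<pi>_def)
    next
      fix n
      define a where "a = F 0 (hist \<pi> n)"
      have a: "a \<in> {0,1}" using Fin unfolding a_def by blast
      define v where "v = (\<lambda>x\<in>{0::nat,1}. if x = 0 then a else 1 - a)"
      have v: "v \<in> AV (S2 :: 'ap cgs)" using a unfolding v_def AV_def S2_def by auto
      have v01: "v 0 = a" "v 1 = 1 - a" by (simp_all add: v_def)
      have ne: "a \<noteq> 1 - a" using a by auto
      have "\<pi> (Suc n) = delta (S2 :: 'ap cgs) (\<pi> n) v"
      proof (cases "n = 0")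
        case True then show ?thesis using v01 ne by (simp add: \<pi>_def S2_def)
      next
        case False then show ?thesis by (simp add: \<pi>_def S2_def)
      qed
      moreover have "\<forall>x\<in>{0} \<inter> Ag (S2 :: 'ap cgs). v x = F x (hist \<pi> n)"
        by (simp add: S2_def v_def a_def)
      ultimately show "\<exists>v\<in>AV (S2 :: 'ap cgs). (\<forall>x\<in>{0} \<inter> Ag (S2 :: 'ap cgs). v x = F x (hist \<pi> n)) \<and>
              \<pi> (Suc n) = delta (S2 :: 'ap cgs) (\<pi> n) v" using v by blast
    qed
    then have "b \<le> Vp (Next (Prop undefined)) (S2 :: 'ap cgs) \<pi>" using all by blast
    then show "b \<in> {0}" by (simp add: \<pi>_def S2_def b4_bot_def)
  next
    fix b :: nat assume b0: "b \<in> {0}"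
    have "is_strats (S2 :: 'ap cgs) {0} (\<lambda>_ _. 0)" unfolding is_strats_def S2_def by simp
    then have "\<exists>F. is_strats (S2 :: 'ap cgs) {0} F \<and>
      (\<forall>\<pi>\<in>out (S2 :: 'ap cgs) 0 {0} F. 0 \<le> Vp (Next (Prop undefined)) (S2 :: 'ap cgs) \<pi>)" by blast
    then show "b \<in> {b. b \<le> b4_top \<and> (\<exists>F. is_strats (S2 :: 'ap cgs) {0} F \<and>
      (\<forall>\<pi>\<in>out (S2 :: 'ap cgs) 0 {0} F. b \<le> Vp (Next (Prop undefined)) (S2 :: 'ap cgs) \<pi>))}" using b0 by (simp add: b4_top_def)
  qed
  then show ?thesis by simp
qed


theorem theorem4:
  fixes dummy :: "'ap::finite"
  shows "(\<forall>\<phi> :: 'ap rctl. \<exists>\<phi>' :: 'ap ratl. \<forall>K :: 'ap kripke. kripke_wf K \<longrightarrow>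
            (\<forall>s\<in>KS K. Vs \<phi>' (cgs_of_kripke K) s = Vcs \<phi> K s))
       \<and> (\<exists>\<psi> :: 'ap ratl. \<forall>\<chi> :: 'ap rctl.
            \<not> (\<forall>S :: 'ap cgs. cgs_wf S \<longrightarrow>
                 (\<forall>s\<in>St S. Vs \<psi> S s = Vcs \<chi> (kripke_of_cgs S) s)))"
proof
  show "\<forall>\<phi> :: 'ap rctl. \<exists>\<phi>' :: 'ap ratl. \<forall>K :: 'ap kripke. kripke_wf K \<longrightarrow>
            (\<forall>s\<in>KS K. Vs \<phi>' (cgs_of_kripke K) s = Vcs \<phi> K s)"
    using tr_correct(1) by blast
next
  show "\<exists>\<psi> :: 'ap ratl. \<forall>\<chi> :: 'ap rctl.
            \<not> (\<forall>S :: 'ap cgs. cgs_wf S \<longrightarrow>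
                 (\<forall>s\<in>St S. Vs \<psi> S s = Vcs \<chi> (kripke_of_cgs S) s))"
  proof (intro exI[of _ psi] allI notI)
    fix \<chi> :: "'ap rctl"
    assume h: "\<forall>S :: 'ap cgs. cgs_wf S \<longrightarrow> (\<forall>s\<in>St S. Vs psi S s = Vcs \<chi> (kripke_of_cgs S) s)"
    have z1: "(0::nat) \<in> St (S1 :: 'ap cgs)" by (simp add: S1_def)
    have z2: "(0::nat) \<in> St (S2 :: 'ap cgs)" by (simp add: S2_def)
    have "Vs psi (S1 :: 'ap cgs) 0 = Vcs \<chi> (kripke_of_cgs (S1 :: 'ap cgs)) 0" using h wf1 z1 by blast
    moreover have "Vs psi (S2 :: 'ap cgs) 0 = Vcs \<chi> (kripke_of_cgs (S2 :: 'ap cgs)) 0" using h wf2 z2 by blast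
    ultimately show False using val1 val2 same_kripke by (metis zero_neq_numeral)
  qed
qed

end
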